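(* Let $P$ be a convex polygon, let $\mathcal{R}$ be the smallest axis-parallel rectangle containing $P$, with side lengths $L\ge W>0$, and let $r=\frac14\sqrt{L^2+4W^2}$. Suppose that $P$ has three vertices forming a triangle such that one of these vertices coincides with a corner of $\mathcal{R}$ and the other two lie respectively on the two sides of $\mathcal{R}$ not incident to that corner. Then $r\le 2\,r_{opt}(P)$.
   Context: For a compact set $X\subset\mathbb{R}^2$, $r_{opt}(X)$ denotes the minimum $r$ such that two closed disks of radius $r$ have union containing $X$. The number $r$ is the radius of the two congruent disks circumscribing the two halves $\frac L2\times W$ of $\mathcal{R}$. *)

theory Defs
  imports "HOL-Analysis.Analysis"
begin

text \<open>Points of the plane are pairs of reals; the product metric on real \<times> real is Euclidean.\<close>

definition convex_polygon :: "(real \<times> real) set \<Rightarrow> bool" where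
  "convex_polygon P \<longleftrightarrow> (\<exists>S. finite S \<and> P = convex hull S) \<and> interior P \<noteq> {}"

definition vertex_of :: "(real \<times> real) \<Rightarrow> (real \<times> real) set \<Rightarrow> bool" where
  "vertex_of x P \<longleftrightarrow> x extreme_point_of P"

text \<open>Smallest axis-parallel rectangle containing P: [xmin,xmax] \<times> [ymin,ymax].\<close>
definition xmin :: "(real \<times> real) set \<Rightarrow> real" where "xmin P = Inf (fst ` P)"
definition xmax :: "(real \<times> real) set \<Rightarrow> real" where "xmax P = Sup (fst ` P)"
definition ymin :: "(real \<times> real) set \<Rightarrow> real" where "ymin P = Inf (snd ` P)"
definition ymax :: "(real \<times> real) set \<Rightarrow> real" where "ymax P = Sup (snd ` P)"

definition bbox_L :: "(real \<times> real) set \<Rightarrow> real" where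
  "bbox_L P = max (xmax P - xmin P) (ymax P - ymin P)"
definition bbox_W :: "(real \<times> real) set \<Rightarrow> real" where
  "bbox_W P = min (xmax P - xmin P) (ymax P - ymin P)"

definition r_opt :: "(real \<times> real) set \<Rightarrow> real" where
  "r_opt X = Inf {r. r \<ge> 0 \<and> (\<exists>c1 c2. X \<subseteq> cball c1 r \<union> cball c2 r)}"

end

theory Submission
  imports Defs
begin

lemma lin_aux:
  fixes A B S T X Y :: real
  assumes "0 \<le> S" "0 \<le> T" "0 \<le> A" "0 \<le> B" "A \<le> 4 * X" "B \<le> 4 * Y" "B \<le> A"
    "3 * A + 4 * T < 4 * B" "4 * S < A"
  shows "(A + 4 * B) / 16 \<le> A + T \<and> (A + 4 * B) / 16 \<le> S + B \<and> (A + 4 * B) / 16 \<le> X + Y"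
proof (intro conjI)
  show "(A + 4 * B) / 16 \<le> A + T" using assms by (simp add: field_simps)
  show "(A + 4 * B) / 16 \<le> S + B" using assms by (simp add: field_simps)
  show "(A + 4 * B) / 16 \<le> X + Y" using assms by (simp add: field_simps)
qed

lemma geo:
  fixes a b s t :: real
  assumes "0 \<le> b" "b \<le> a" "0 \<le> s" "s \<le> a" "0 \<le> t" "t \<le> b"
  shows "4 * ((a^2 + 4*b^2)/16) \<le> a^2 + t^2 \<or> 4 * ((a^2 + 4*b^2)/16) \<le> s^2 + b^2 \<or>
    ((a^2 + 4*b^2)/16 \<le> a^2 + t^2 \<and> (a^2 + 4*b^2)/16 \<le> s^2 + b^2 \<and> (a^2 + 4*b^2)/16 \<le> (a-s)^2 + (b-t)^2)"
proof (cases "4 * ((a^2 + 4*b^2)/16) \<le> a^2 + t^2 \<or> 4 * ((a^2 + 4*b^2)/16) \<le> s^2 + b^2")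
  case True then show ?thesis by blast
next
  case False
  then have h1: "3 * a^2 + 4 * t^2 < 4 * b^2" and h2: "4 * s^2 < a^2" by auto
  have ba: "b^2 \<le> a^2" using assms by (simp add: power_mono)
  have s2: "s < a/2"
  proof (rule ccontr)
    assume "\<not> s < a/2"
    then have "(a/2)^2 \<le> s^2" using assms by (intro power_mono) auto
    then show False using h2 by (simp add: power_divide)
  qed
  have t2: "t < b/2"
  proof (rule ccontr)
    assume "\<not> t < b/2"
    then have "(b/2)^2 \<le> t^2" using assms by (intro power_mono) auto
    then show False using h1 ba by (simp add: power_divide)
  qed
  have "(a/2)^2 \<le> (a-s)^2" using s2 assms by (intro power_mono) auto
  then have A: "a^2 \<le> 4*(a-s)^2" by (simp add: power_divide)
  have "(b/2)^2 \<le> (b-t)^2" using t2 assms by (intro power_mono) auto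
  then have B: "b^2 \<le> 4*(b-t)^2" by (simp add: power_divide)
  have "0 \<le> s^2" "0 \<le> t^2" "0 \<le> a^2" "0 \<le> b^2" by simp_all
  then have "(a^2 + 4*b^2)/16 \<le> a^2 + t^2 \<and> (a^2 + 4*b^2)/16 \<le> s^2 + b^2 \<and> (a^2 + 4*b^2)/16 \<le> (a-s)^2 + (b-t)^2"
    using lin_aux[OF _ _ _ _ A B ba h1 h2] by simp
  then show ?thesis by blast
qed

lemma three_pts:
  fixes P :: "(real \<times> real) set"
  assumes cov: "P \<subseteq> cball c1 r \<union> cball c2 r"
    and xyz: "x \<in> P" "y \<in> P" "z \<in> P"
    and d: "Q \<le> (dist x y)^2" "Q \<le> (dist y z)^2" "Q \<le> (dist x z)^2"
  shows "sqrt Q \<le> 2 * r"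
proof -
  have aux: "dist p q \<le> 2 * r" if "p \<in> cball c r" "q \<in> cball c r" for p q c
  proof -
    have "dist p q \<le> dist c p + dist c q" by (rule dist_triangle3)
    then show ?thesis using that by simp
  qed
  have "x \<in> cball c1 r \<or> x \<in> cball c2 r" "y \<in> cball c1 r \<or> y \<in> cball c2 r"
    "z \<in> cball c1 r \<or> z \<in> cball c2 r" using cov xyz by auto
  then have "dist x y \<le> 2 * r \<or> dist y z \<le> 2 * r \<or> dist x z \<le> 2 * r"
    using aux by metis
  moreover have "sqrt Q \<le> dist p q" if "Q \<le> (dist p q)^2" for p q :: "real \<times> real"
  proof -
    have "sqrt Q \<le> sqrt ((dist p q)^2)" using that by (rule real_sqrt_le_mono)
    then show ?thesis by simp
  qed
  ultimately show ?thesis using d by (meson order_trans)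
qed

lemma cover_bound:
  fixes P :: "(real \<times> real) set"
  assumes cov: "P \<subseteq> cball c1 r \<union> cball c2 r" and cP: "convex P"
    and uvw: "u \<in> P" "v \<in> P" "w \<in> P"
    and h: "4*Q \<le> (dist u v)^2 \<or> 4*Q \<le> (dist u w)^2 \<or>
      (Q \<le> (dist u v)^2 \<and> Q \<le> (dist u w)^2 \<and> Q \<le> (dist v w)^2)"
  shows "sqrt Q \<le> 2 * r"
proof -
  have mid: "midpoint p q \<in> P \<and> Q \<le> (dist p (midpoint p q))^2 \<and> Q \<le> (dist (midpoint p q) q)^2"
    if "p \<in> P" "q \<in> P" "4*Q \<le> (dist p q)^2" for p q
  proof -
    have "midpoint p q \<in> P"
      using cP that(1,2) midpoint_in_closed_segment convex_contains_segment by blast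
    moreover have "(dist p (midpoint p q))^2 = (dist p q)^2 / 4"
      by (simp add: dist_midpoint power_divide)
    moreover have "(dist (midpoint p q) q)^2 = (dist p q)^2 / 4"
      by (simp add: dist_midpoint power_divide)
    ultimately show ?thesis using that(3) by simp
  qed
  from h consider (A) "4*Q \<le> (dist u v)^2" | (B) "4*Q \<le> (dist u w)^2"
    | (C) "Q \<le> (dist u v)^2" "Q \<le> (dist u w)^2" "Q \<le> (dist v w)^2" by blast
  then show ?thesis
  proof cases
    case A
    have "0 \<le> (dist u v)^2" by simp
    then have "Q \<le> (dist u v)^2" using A by (smt (verit))
    with mid[OF uvw(1,2) A] show ?thesis
      using three_pts[OF cov uvw(1) _ uvw(2), of "midpoint u v" Q] by blast
  next
    case B
    have "0 \<le> (dist u w)^2" by simp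
    then have "Q \<le> (dist u w)^2" using B by (smt (verit))
    with mid[OF uvw(1,3) B] show ?thesis
      using three_pts[OF cov uvw(1) _ uvw(3), of "midpoint u w" Q] by blast
  next
    case C
    then show ?thesis using three_pts[OF cov uvw(1,2,3), of Q] by (simp add: dist_commute)
  qed
qed

lemma dist_sq: "(dist p q)^2 = (fst p - fst q)^2 + (snd p - snd q)^2"
  for p q :: "real \<times> real"
  by (simp add: dist_prod_def dist_real_def)

theorem lemma2:
  fixes P :: "(real \<times> real) set" and u v w :: "real \<times> real" and cx cy :: real
  assumes "convex_polygon P"
    and "bbox_W P > 0"
    and "vertex_of u P" and "vertex_of v P" and "vertex_of w P"
    and "\<not> collinear {u, v, w}"
    and "cx \<in> {xmin P, xmax P}" and "cy \<in> {ymin P, ymax P}"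
    and "u = (cx, cy)"
    and "fst v = xmin P + xmax P - cx"
    and "snd w = ymin P + ymax P - cy"
  shows "sqrt ((bbox_L P)\<^sup>2 + 4 * (bbox_W P)\<^sup>2) / 4 \<le> 2 * r_opt P"
proof -
  obtain S where S: "finite S" "P = convex hull S" and ne: "interior P \<noteq> {}"
    using assms(1) unfolding convex_polygon_def by blast
  have cP: "compact P" using S by (simp add: compact_convex_hull finite_imp_compact)
  have bP: "bounded P" using cP by (rule compact_imp_bounded)
  have cvx: "convex P" using S by simp
  have neP: "P \<noteq> {}" using ne interior_subset by blast
  have bf: "bdd_above (fst ` P)" "bdd_below (fst ` P)" "bdd_above (snd ` P)" "bdd_below (snd ` P)"
    using bP by (auto intro!: bounded_imp_bdd_above bounded_imp_bdd_below bounded_linear_image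
        bounded_linear_fst bounded_linear_snd)
  have bx: "xmin P \<le> fst p \<and> fst p \<le> xmax P" if "p \<in> P" for p
    unfolding xmin_def xmax_def using that bf by (auto intro: cInf_lower cSup_upper)
  have by': "ymin P \<le> snd p \<and> snd p \<le> ymax P" if "p \<in> P" for p
    unfolding ymin_def ymax_def using that bf by (auto intro: cInf_lower cSup_upper)
  have uP: "u \<in> P" and vP: "v \<in> P" and wP: "w \<in> P"
    using assms(3,4,5) unfolding vertex_of_def extreme_point_of_def by auto
  define a where "a = xmax P - xmin P"
  define b where "b = ymax P - ymin P"
  define s where "s = \<bar>fst w - cx\<bar>"
  define t where "t = \<bar>snd v - cy\<bar>"
  have a0: "0 \<le> a" using bx[OF uP] unfolding a_def by linarith
  have b0: "0 \<le> b" using by'[OF uP] unfolding b_def by linarith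
  have s0: "0 \<le> s" "s \<le> a" using bx[OF wP] assms(7) unfolding s_def a_def by auto
  have t0: "0 \<le> t" "t \<le> b" using by'[OF vP] assms(8) unfolding t_def b_def by auto
  have e1: "\<bar>fst u - fst v\<bar> = a" using assms(7,9,10) bx[OF uP] unfolding a_def by auto
  have e2: "\<bar>snd u - snd w\<bar> = b" using assms(8,9,11) by'[OF uP] unfolding b_def by auto
  have e3: "\<bar>fst u - fst w\<bar> = s" using assms(9) unfolding s_def by simp
  have e4: "\<bar>snd u - snd v\<bar> = t" using assms(9) unfolding t_def by simp
  have e5: "\<bar>fst v - fst w\<bar> = a - s"
    using assms(7,10) bx[OF wP] unfolding s_def a_def by auto
  have e6: "\<bar>snd v - snd w\<bar> = b - t"
    using assms(8,11) by'[OF vP] unfolding t_def b_def by auto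
  have duv: "(dist u v)^2 = a^2 + t^2"
    unfolding dist_sq by (metis e1 e4 power2_abs)
  have duw: "(dist u w)^2 = s^2 + b^2"
    unfolding dist_sq by (metis e2 e3 power2_abs)
  have dvw: "(dist v w)^2 = (a - s)^2 + (b - t)^2"
    unfolding dist_sq by (metis e5 e6 power2_abs)
  have LW: "bbox_L P = max a b" "bbox_W P = min a b"
    unfolding bbox_L_def bbox_W_def a_def b_def by simp_all
  define Q where "Q = ((bbox_L P)\<^sup>2 + 4 * (bbox_W P)\<^sup>2) / 16"
  have hQ: "4*Q \<le> (dist u v)^2 \<or> 4*Q \<le> (dist u w)^2 \<or>
      (Q \<le> (dist u v)^2 \<and> Q \<le> (dist u w)^2 \<and> Q \<le> (dist v w)^2)"
  proof (cases "b \<le> a")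
    case True
    then have Qe: "Q = (a^2 + 4*b^2)/16" unfolding Q_def LW by simp
    show ?thesis unfolding Qe duv duw dvw using geo[OF b0 True s0 t0] by blast
  next
    case False
    then have Qe: "Q = (b^2 + 4*a^2)/16" unfolding Q_def LW by simp
    have "a \<le> b" using False by simp
    show ?thesis unfolding Qe duv duw dvw using geo[OF a0 \<open>a \<le> b\<close> t0 s0]
      by (metis add.commute)
  qed
  define Rs where "Rs = {r. r \<ge> 0 \<and> (\<exists>c1 c2. P \<subseteq> cball c1 r \<union> cball c2 r)}"
  have key: "sqrt Q / 2 \<le> r" if rR: "r \<in> Rs" for r
  proof -
    obtain c1 c2 where cov: "P \<subseteq> cball c1 r \<union> cball c2 r" using rR unfolding Rs_def by blast
    have "sqrt Q \<le> 2 * r" by (rule cover_bound[OF cov cvx uP vP wP hQ])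
    then show ?thesis by simp
  qed
  have RsNe: "Rs \<noteq> {}"
  proof -
    obtain e x where "0 \<le> e" "P \<subseteq> cball x e" using bP unfolding bounded_subset_cball by blast
    then have "P \<subseteq> cball x e \<union> cball x e" by simp
    then have "e \<in> Rs" unfolding Rs_def using \<open>0 \<le> e\<close> by blast
    then show ?thesis by blast
  qed
  have ro: "sqrt Q / 2 \<le> r_opt P"
    unfolding r_opt_def Rs_def[symmetric]
  proof (rule cInf_greatest)
    show "Rs \<noteq> {}" by (rule RsNe)
    fix r assume "r \<in> Rs"
    from key[OF this] show "sqrt Q / 2 \<le> r" .
  qed
  have "(bbox_L P)\<^sup>2 + 4 * (bbox_W P)\<^sup>2 = 16 * Q" unfolding Q_def by simp
  then have "sqrt ((bbox_L P)\<^sup>2 + 4 * (bbox_W P)\<^sup>2) = 4 * sqrt Q"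
    by (simp add: real_sqrt_mult)
  then show ?thesis using ro by simp
qed

end
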